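(* For $\alpha\in\Sigma_0^+$ put $x_\alpha=\tfrac14(m_{\alpha/2}+2)$ and $y_\alpha=\tfrac14(m_{\alpha/2}+2m_\alpha)$. Let $\mu\in\Lambda^+$. Then $\mu_\alpha\in\mathbb Z_{\geq0}$ for all $\alpha\in\Sigma_0^+$, and \[ \mathbf c(\mu+\rho)=\prod_{\alpha\in\Sigma_0^+}\left(\Big(1+\frac{x_\alpha}{\rho_\alpha}\Big)\Big(1+\frac{y_\alpha}{\rho_\alpha}\Big)\right)^{-\mu_\alpha}\cdot\prod_{j=0}^{\mu_\alpha-1}\frac{\big(1+\frac{j}{2\rho_\alpha}\big)\big(1+\frac{\mu_\alpha+j}{2\rho_\alpha}\big)}{\big(1+\frac{j}{x_\alpha+\rho_\alpha}\big)\big(1+\frac{j}{y_\alpha+\rho_\alpha}\big)}, \] where the inner product over $j$ is interpreted as $1$ when $\mu_\alpha=0$.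
   Context: Standing setup. $G$ is a connected compact semisimple Lie group with Lie algebra $\mathfrak g$, $\theta$ an involutive automorphism, $K$ a closed subgroup with $(G^\theta)_0\subseteq K\subseteq G^\theta$, $M=G/K$ simply connected. $\mathfrak g=\mathfrak k\oplus\mathfrak s$ is the eigenspace decomposition of $\theta$, $\mathfrak a\subseteq\mathfrak s$ is maximal abelian, and a $K$-invariant inner product on $\mathfrak s$ induces a real inner product $\langle\cdot,\cdot\rangle$ on $i\mathfrak a^*$. $\Sigma\subset i\mathfrak a^*$ is the set of restricted roots of $(\mathfrak g_{\mathbb C},\mathfrak a_{\mathbb C})$, $m_\alpha=\dim_{\mathbb C}\mathfrak g_{\mathbb C,\alpha}$ the multiplicity (with $m_\beta=0$ if $\beta\notin\Sigma$), $\Sigma^+$ a positive system, $\Sigma_0^+=\{\alpha\in\Sigma^+:2\alpha\notin\Sigma\}$, and $\rho=\tfrac12\sum_{\alpha\in\Sigma^+}m_\alpha\alpha$. For $\lambda\in\mathfrak a_{\mathbb C}^*$ and $\alpha\in\Sigma$, $\lambda_\alpha=\langle\lambda,\alpha\rangle/\langle\alpha,\alpha\rangle$ (so $\rho_\alpha=\langle\rho,\alpha\rangle/\langle\alpha,\alpha\rangle>0$ for $\alpha\in\Sigma^+$). $\Lambda^+=\{\mu\in i\mathfrak a^*:\mu_\alpha\in\mathbb Z_{\ge0}\ \forall\alpha\in\Sigma^+\}$. The Harish-Chandra $c$-function is $\mathbf c(\lambda)={}'c(\lambda)/{}'c(\rho)$ with \[ {}'c(\lambda)=\prod_{\alpha\in\Sigma_0^+}\frac{2^{-2\lambda_\alpha}\,\Gamma(2\lambda_\alpha)}{\Gamma\big(\lambda_\alpha+\tfrac{m_{\alpha/2}}{4}+\tfrac12\big)\,\Gamma\big(\lambda_\alpha+\tfrac{m_{\alpha/2}}{4}+\tfrac{m_\alpha}{2}\big)}.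 \] *)

theory Defs
  imports "HOL-Analysis.Analysis"
begin

text \<open>The real Euclidean space i a^* is modelled by a type 'a :: euclidean_space,
  with the inner product written as a dot.\<close>

definition coef :: "'a::euclidean_space \<Rightarrow> 'a \<Rightarrow> real" where
  "coef l \<alpha> = (l \<bullet> \<alpha>) / (\<alpha> \<bullet> \<alpha>)"

definition refl :: "'a::euclidean_space \<Rightarrow> 'a \<Rightarrow> 'a" where
  "refl \<alpha> \<beta> = \<beta> - (2 * coef \<beta> \<alpha>) *\<^sub>R \<alpha>"

definition root_system :: "'a::euclidean_space set \<Rightarrow> bool" where
  "root_system S \<longleftrightarrow> finite S \<and> 0 \<notin> S \<and> span S = UNIV \<and>
     (\<forall>\<alpha>\<in>S. \<forall>\<beta>\<in>S. refl \<alpha> \<beta> \<in> S \<and> 2 * coef \<beta> \<alpha> \<in> \<int>)"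

definition multiplicity :: "'a::euclidean_space set \<Rightarrow> ('a \<Rightarrow> nat) \<Rightarrow> bool" where
  "multiplicity S m \<longleftrightarrow> (\<forall>\<beta>. \<beta> \<notin> S \<longrightarrow> m \<beta> = 0) \<and> (\<forall>\<alpha>\<in>S. m \<alpha> > 0) \<and>
     (\<forall>\<alpha>\<in>S. \<forall>\<beta>\<in>S. m (refl \<alpha> \<beta>) = m \<beta>)"

definition positive_system :: "'a::euclidean_space set \<Rightarrow> 'a set \<Rightarrow> bool" where
  "positive_system S Sp \<longleftrightarrow> (\<exists>H. (\<forall>\<alpha>\<in>S. \<alpha> \<bullet> H \<noteq> 0) \<and> Sp = {\<alpha>\<in>S. \<alpha> \<bullet> H > 0})"

definition Sigma0 :: "'a::euclidean_space set \<Rightarrow> 'a set \<Rightarrow> 'a set" where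
  "Sigma0 S Sp = {\<alpha>\<in>Sp. 2 *\<^sub>R \<alpha> \<notin> S}"

definition rho :: "'a::euclidean_space set \<Rightarrow> ('a \<Rightarrow> nat) \<Rightarrow> 'a" where
  "rho Sp m = (1/2) *\<^sub>R (\<Sum>\<alpha>\<in>Sp. real (m \<alpha>) *\<^sub>R \<alpha>)"

definition Lambda_plus :: "'a::euclidean_space set \<Rightarrow> 'a set" where
  "Lambda_plus Sp = {\<mu>. \<forall>\<alpha>\<in>Sp. \<exists>n::nat. coef \<mu> \<alpha> = real n}"

text \<open>The function c' (evaluated at real points of i a^*).\<close>
definition cprime :: "'a::euclidean_space set \<Rightarrow> 'a set \<Rightarrow> ('a \<Rightarrow> nat) \<Rightarrow> 'a \<Rightarrow> real" where
  "cprime S Sp m l = (\<Prod>\<alpha>\<in>Sigma0 S Sp.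
      (2 powr (- 2 * coef l \<alpha>) * Gamma (2 * coef l \<alpha>)) /
      (Gamma (coef l \<alpha> + real (m ((1/2) *\<^sub>R \<alpha>)) / 4 + 1/2) *
       Gamma (coef l \<alpha> + real (m ((1/2) *\<^sub>R \<alpha>)) / 4 + real (m \<alpha>) / 2)))"

definition c_fun :: "'a::euclidean_space set \<Rightarrow> 'a set \<Rightarrow> ('a \<Rightarrow> nat) \<Rightarrow> 'a \<Rightarrow> real" where
  "c_fun S Sp m l = cprime S Sp m l / cprime S Sp m (rho Sp m)"

end

theory Submission
  imports Defs
begin

definition FF :: "real \<Rightarrow> real \<Rightarrow> real \<Rightarrow> real" where
 "FF x y l = 2 powr (- 2 * l) * Gamma (2 * l) / (Gamma (l + x) * Gamma (l + y))"

lemma Gamma_shift: "(z::real) > 0 \<Longrightarrow> Gamma (z + real n) = pochhammer z n * Gamma z"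
proof -
  assume "z > 0"
  hence "z \<notin> \<int>\<^sub>\<le>\<^sub>0" by (auto elim!: nonpos_Ints_cases)
  moreover have "Gamma z > 0" using \<open>z>0\<close> by (rule Gamma_real_pos)
  hence nz: "Gamma z \<noteq> 0" by linarith
  from pochhammer_Gamma[OF \<open>z \<notin> \<int>\<^sub>\<le>\<^sub>0\<close>, of n]
  have "pochhammer z n = Gamma (z + real n) / Gamma z" by simp
  with nz show ?thesis by simp
qed

lemma abs_id:
  fixes A c P g g1 g2 p1 p2 :: real
  assumes "g > 0" "g1 > 0" "g2 > 0" "p1 > 0" "p2 > 0" "A > 0"
  shows "c * A * (P * g) / (p1 * g1 * (p2 * g2)) / (A * g / (g1 * g2)) = c * P / (p1 * p2)"
  using assms by (simp add: field_simps)

lemma abs_id2: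
  fixes r a b A B C D :: real
  assumes "r \<noteq> 0" "a \<noteq> 0" "b \<noteq> 0" "C \<noteq> 0" "D \<noteq> 0"
  shows "r * r / (a * b) * ((A / (2*r)) * (B / (2*r)) / ((C / a) * (D / b))) = 1/4 * (A*B) / (C*D)"
  using assms by (simp add: field_simps)

lemma key:
  fixes r x y :: real and k :: nat
  assumes r: "r > 0" and x: "x \<ge> 0" and y: "y \<ge> 0"
  shows "FF x y (real k + r) / FF x y r =
    ((1 + x / r) * (1 + y / r)) powr (- real k) *
           (\<Prod>j<k.
              ((1 + real j / (2 * r)) * (1 + (real k + real j) / (2 * r))) /
              ((1 + real j / (x + r)) * (1 + real j / (y + r))))"
proof -
  have G1: "Gamma (2 * (real k + r)) = pochhammer (2*r) (2*k) * Gamma (2*r)"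
    using Gamma_shift[of "2*r" "2*k"] r by (simp add: algebra_simps)
  have G2: "Gamma (real k + r + x) = pochhammer (r+x) k * Gamma (r+x)"
    using Gamma_shift[of "r+x" k] r x by (simp add: algebra_simps)
  have G3: "Gamma (real k + r + y) = pochhammer (r+y) k * Gamma (r+y)"
    using Gamma_shift[of "r+y" k] r y by (simp add: algebra_simps)
  have gp: "Gamma (2*r) > 0" "Gamma (r+x) > 0" "Gamma (r+y) > 0"
    using r x y by (auto intro!: Gamma_real_pos)
  have pp: "pochhammer (r+x) k > 0" "pochhammer (r+y) k > 0"
    using r x y by (auto intro!: pochhammer_pos)
  have pw: "2 powr (- 2 * (real k + r)) = (1/4)^k * 2 powr (-2*r)"
  proof -
    have "2 powr (- 2 * (real k + r)) = 2 powr (- 2 * real k) * 2 powr (-2*r)"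
      by (simp add: algebra_simps flip: powr_add)
    moreover have "2 powr (- 2 * real k) = (1/4::real)^k"
    proof -
      have "(2::real) powr (real (2*k)) = 2^(2*k)" by (rule powr_realpow) simp
      also have "\<dots> = 4^k" by (simp add: power_mult)
      finally have "(2::real) powr (2 * real k) = 4^k" by simp
      thus ?thesis by (simp add: powr_minus power_one_over inverse_eq_divide)
    qed
    ultimately show ?thesis by simp
  qed
  have L: "FF x y (real k + r) / FF x y r
      = (1/4)^k * pochhammer (2*r) (2*k) / (pochhammer (r+x) k * pochhammer (r+y) k)"
    unfolding FF_def G1 G2 G3 pw
    by (rule abs_id) (simp_all add: gp pp)
  have P2: "pochhammer (2*r) (2*k) = (\<Prod>j<k. (2*r + real j) * (2*r + real k + real j))"
  proof -
    have kk: "2*k = k+k" by simp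
    have "pochhammer (2*r) (2*k) = pochhammer (2*r) k * pochhammer (2*r + real k) k"
      unfolding kk by (rule pochhammer_product')
    also have "\<dots> = (\<Prod>j<k. 2*r + real j) * (\<Prod>j<k. 2*r + real k + real j)"
      by (simp only: pochhammer_prod atLeast0LessThan)
    also have "\<dots> = (\<Prod>j<k. (2*r + real j) * (2*r + real k + real j))"
      by (rule prod.distrib[symmetric])
    finally show ?thesis .
  qed
  have Px: "pochhammer (r+x) k = (\<Prod>j<k. r + x + real j)"
    by (simp add: pochhammer_prod atLeast0LessThan)
  have Py: "pochhammer (r+y) k = (\<Prod>j<k. r + y + real j)"
    by (simp add: pochhammer_prod atLeast0LessThan)
  have base: "(1 + x / r) * (1 + y / r) > 0" using r x y by (simp add: add_pos_nonneg)
  have pwk: "((1 + x / r) * (1 + y / r)) powr (- real k) = (\<Prod>j<k. r*r/((r+x)*(r+y)))"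
    using base r x y by (simp add: powr_minus powr_realpow field_simps)
  have R: "((1 + x / r) * (1 + y / r)) powr (- real k) *
           (\<Prod>j<k.
              ((1 + real j / (2 * r)) * (1 + (real k + real j) / (2 * r))) /
              ((1 + real j / (x + r)) * (1 + real j / (y + r))))
      = (\<Prod>j<k. (1/4) * ((2*r + real j) * (2*r + real k + real j)) / ((r + x + real j) * (r + y + real j)))"
    unfolding pwk prod.distrib[symmetric]
  proof (rule prod.cong[OF refl])
    fix j assume "j \<in> {..<k}"
    have nz: "r + x + real j \<noteq> 0" "r + y + real j \<noteq> 0" "x + r \<noteq> 0" "y + r \<noteq> 0"
      "r + x \<noteq> 0" "r + y \<noteq> 0" "r \<noteq> 0" "x + r + real j \<noteq> 0" "y + r + real j \<noteq> 0" using r x y by auto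
    have e1: "1 + real j / (x + r) = (r + x + real j) / (r + x)" using nz by (simp add: field_simps)
    have e2: "1 + real j / (y + r) = (r + y + real j) / (r + y)" using nz by (simp add: field_simps)
    have e3: "1 + real j / (2 * r) = (2*r + real j) / (2*r)" using nz by (simp add: field_simps)
    have e4: "1 + (real k + real j) / (2 * r) = (2*r + real k + real j) / (2*r)" using nz by (simp add: field_simps)
    show "r * r / ((r + x) * (r + y)) *
         ((1 + real j / (2 * r)) * (1 + (real k + real j) / (2 * r)) /
          ((1 + real j / (x + r)) * (1 + real j / (y + r)))) =
         1 / 4 * ((2 * r + real j) * (2 * r + real k + real j)) / ((r + x + real j) * (r + y + real j))"
      unfolding e1 e2 e3 e4 by (rule abs_id2) (use nz in \<open>simp_all add: add.assoc\<close>)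
  qed
  show ?thesis unfolding L R P2 Px Py
    by (simp add: prod.distrib prod_dividef power_one_over)
qed

lemma cfac:
  fixes a b c :: real
  shows "2 powr (- 2 * c) * Gamma (2 * c) / (Gamma (c + a / 4 + 1/2) * Gamma (c + a / 4 + b / 2))
    = FF ((a + 2) / 4) ((a + 2 * b) / 4) c"
proof -
  have h1: "c + a / 4 + 1/2 = c + (a + 2) / 4" by (simp add: field_simps)
  have h2: "c + a / 4 + b / 2 = c + (a + 2 * b) / 4" by (simp add: field_simps)
  show ?thesis unfolding h1 h2 FF_def ..
qed

lemma coef_add: "coef (u + v) a = coef u a + coef v a"
  by (simp add: coef_def inner_add_left add_divide_distrib)

theorem theorem3p5:
  fixes S Sp :: "'a::euclidean_space set" and m :: "'a \<Rightarrow> nat" and \<mu> :: 'a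
  assumes "root_system S" and "multiplicity S m" and "positive_system S Sp"
    and rho_pos: "\<forall>\<alpha>\<in>Sp. coef (rho Sp m) \<alpha> > 0"
    and "\<mu> \<in> Lambda_plus Sp"
  shows "(\<forall>\<alpha>\<in>Sigma0 S Sp. \<exists>n::nat. coef \<mu> \<alpha> = real n) \<and>
    c_fun S Sp m (\<mu> + rho Sp m) =
      (\<Prod>\<alpha>\<in>Sigma0 S Sp.
        let x = (real (m ((1/2) *\<^sub>R \<alpha>)) + 2) / 4;
            y = (real (m ((1/2) *\<^sub>R \<alpha>)) + 2 * real (m \<alpha>)) / 4;
            r = coef (rho Sp m) \<alpha>;
            k = coef \<mu> \<alpha>
        in ((1 + x / r) * (1 + y / r)) powr (- k) *
           (\<Prod>j<nat \<lfloor>k\<rfloor>.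
              ((1 + real j / (2 * r)) * (1 + (k + real j) / (2 * r))) /
              ((1 + real j / (x + r)) * (1 + real j / (y + r)))))"
proof -
  have sub: "Sigma0 S Sp \<subseteq> Sp" by (auto simp: Sigma0_def)
  have nat: "\<forall>\<alpha>\<in>Sigma0 S Sp. \<exists>n::nat. coef \<mu> \<alpha> = real n"
    using assms(5) sub by (auto simp: Lambda_plus_def)
  have "c_fun S Sp m (\<mu> + rho Sp m) =
     (\<Prod>\<alpha>\<in>Sigma0 S Sp.
        FF ((real (m ((1/2) *\<^sub>R \<alpha>)) + 2) / 4) ((real (m ((1/2) *\<^sub>R \<alpha>)) + 2 * real (m \<alpha>)) / 4)
           (coef \<mu> \<alpha> + coef (rho Sp m) \<alpha>) /
        FF ((real (m ((1/2) *\<^sub>R \<alpha>)) + 2) / 4) ((real (m ((1/2) *\<^sub>R \<alpha>)) + 2 * real (m \<alpha>)) / 4)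
           (coef (rho Sp m) \<alpha>))"
    unfolding c_fun_def cprime_def cfac coef_add by (simp add: prod_dividef)
  also have "\<dots> = (\<Prod>\<alpha>\<in>Sigma0 S Sp.
        let x = (real (m ((1/2) *\<^sub>R \<alpha>)) + 2) / 4;
            y = (real (m ((1/2) *\<^sub>R \<alpha>)) + 2 * real (m \<alpha>)) / 4;
            r = coef (rho Sp m) \<alpha>;
            k = coef \<mu> \<alpha>
        in ((1 + x / r) * (1 + y / r)) powr (- k) *
           (\<Prod>j<nat \<lfloor>k\<rfloor>.
              ((1 + real j / (2 * r)) * (1 + (k + real j) / (2 * r))) /
              ((1 + real j / (x + r)) * (1 + real j / (y + r)))))"
  proof (rule prod.cong[OF refl])
    fix \<alpha> assume a: "\<alpha> \<in> Sigma0 S Sp"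
    then obtain n :: nat where n: "coef \<mu> \<alpha> = real n" using nat by blast
    have r: "coef (rho Sp m) \<alpha> > 0" using rho_pos a sub by blast
    show "FF ((real (m ((1/2) *\<^sub>R \<alpha>)) + 2) / 4) ((real (m ((1/2) *\<^sub>R \<alpha>)) + 2 * real (m \<alpha>)) / 4)
           (coef \<mu> \<alpha> + coef (rho Sp m) \<alpha>) /
        FF ((real (m ((1/2) *\<^sub>R \<alpha>)) + 2) / 4) ((real (m ((1/2) *\<^sub>R \<alpha>)) + 2 * real (m \<alpha>)) / 4)
           (coef (rho Sp m) \<alpha>) = (let x = (real (m ((1/2) *\<^sub>R \<alpha>)) + 2) / 4;
            y = (real (m ((1/2) *\<^sub>R \<alpha>)) + 2 * real (m \<alpha>)) / 4;
            r = coef (rho Sp m) \<alpha>;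
            k = coef \<mu> \<alpha>
        in ((1 + x / r) * (1 + y / r)) powr (- k) *
           (\<Prod>j<nat \<lfloor>k\<rfloor>.
              ((1 + real j / (2 * r)) * (1 + (k + real j) / (2 * r))) /
              ((1 + real j / (x + r)) * (1 + real j / (y + r)))))"
      unfolding Let_def n floor_of_nat nat_int
      by (rule key[OF r]) simp_all
  qed
  finally show ?thesis using nat by blast
qed

end
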